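(* Let $\mathbf X$ be a label cover instance and $\mathcal M$ a minion. Then $\kappa_{\mathrm{arc}}(\mathbf X)\to\mathcal M$ if and only if $\mathbf X\to\omega(\mathcal M)$ (minions viewed as structures in the label cover signature).
   Context: Label cover. The label cover signature has a type $X$ for each finite set $X$ and a binary symbol $E_\pi$ of arity $(X,Y)$ for each map $\pi\colon X\to Y$ between finite sets. A homomorphism between structures of this signature is a type-preserving family of maps preserving every $E_\pi$. A label cover instance is a structure $\mathbf S$ of this signature with finitely many nonempty domains, all finite. Arc-consistency on label cover. For a label cover instance $\mathbf S$, let $D_v$ be the type of $v$. Set $\mathcal F_v=D_v$ for each element $v$; while something changes, for each constraint $(v,w)\in E_\pi^{\mathbf S}$ ($\pi\colon D_v\to D_w$), remove from $\mathcal F_w$ elements not in $\pi(\mathcal F_v)$ and remove from $\mathcal F_v$ elements $x$ with $\pi(x)\notin\mathcal F_w$. The output $\kappa_{\mathrm{arc}}(\mathbf S)$ is the label cover instance with an element $v$ of type $\mathcal F_v$ for each element $v$ of $\mathbf S$, and a constraint $(v,w)\in E_{\pi'}$ for each constraint $(v,w)\in E_\pi^{\mathbf S}$, where $\pi'=\pi|_{\mathcal F_v}\colon\mathcal F_v\to\mathcal F_w$. Minions. An (abstract) minion $\mathcal M$ assigns to each finite set $X$ a set $\mathcal M^{(X)}$, nonempty iff $X\ne\emptyset$, and to each map $\pi\colon X\to Y$ a map $\mathcal M^{(X)}\to\mathcal M^{(Y)}$, $f\mapsto f^\pi$, functorially (identities to identities, $(f^\sigma)^\pi=f^{\pi\circ\sigma}$).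 A minion $\mathcal M$ is viewed as the (infinite) structure in the label cover signature with domain $\mathcal M^{(X)}$ of type $X$ and $E_\pi=\{(f,f^\pi)\mid f\in\mathcal M^{(X)}\}$ for $\pi\colon X\to Y$. The minion $\omega(\mathcal M)$. $\omega(\mathcal M)^{(X)}=\{(Y,f)\mid Y\subseteq X,\ f\in\mathcal M^{(Y)}\}$, and for $\pi\colon X\to Y'$, $(Z,f)^\pi=(\pi(Z),f^{\pi|_Z})$, where $\pi|_Z\colon Z\to\pi(Z)$ is the restriction. *)

theory Defs
  imports Main "HOL-Library.FuncSet"
begin

text \<open>
Finite sets (types of the label cover signature) are finite subsets of a fixed
label type 'a.  A map pi : X -> Y between finite sets is an extensional function
pi in X ->E Y (the triple (X, Y, pi) determines the map).
\<close>

text \<open>A minion is given by its sets Mel X (for finite X) and its minor operation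
Mmin X Y pi f = f^pi for pi : X -> Y.\<close>

definition is_minion ::
  "('a set \<Rightarrow> 'm set) \<Rightarrow> ('a set \<Rightarrow> 'a set \<Rightarrow> ('a \<Rightarrow> 'a) \<Rightarrow> 'm \<Rightarrow> 'm) \<Rightarrow> bool" where
  "is_minion Mel Mmin \<longleftrightarrow>
     (\<forall>X. finite X \<longrightarrow> (Mel X \<noteq> {} \<longleftrightarrow> X \<noteq> {})) \<and>
     (\<forall>X Y pi f. finite X \<and> finite Y \<and> pi \<in> X \<rightarrow>\<^sub>E Y \<and> f \<in> Mel X
        \<longrightarrow> Mmin X Y pi f \<in> Mel Y) \<and>
     (\<forall>X f. finite X \<and> f \<in> Mel X \<longrightarrow> Mmin X X (restrict id X) f = f) \<and>
     (\<forall>X Y Z sigma pi f. finite X \<and> finite Y \<and> finite Z \<and>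
        sigma \<in> X \<rightarrow>\<^sub>E Y \<and> pi \<in> Y \<rightarrow>\<^sub>E Z \<and> f \<in> Mel X
        \<longrightarrow> Mmin Y Z pi (Mmin X Y sigma f) = Mmin X Z (compose X pi sigma) f)"

definition omega_el :: "('a set \<Rightarrow> 'm set) \<Rightarrow> 'a set \<Rightarrow> ('a set \<times> 'm) set" where
  "omega_el Mel X = {(Y, f). Y \<subseteq> X \<and> f \<in> Mel Y}"

definition omega_min ::
  "('a set \<Rightarrow> 'a set \<Rightarrow> ('a \<Rightarrow> 'a) \<Rightarrow> 'm \<Rightarrow> 'm) \<Rightarrow>
   'a set \<Rightarrow> 'a set \<Rightarrow> ('a \<Rightarrow> 'a) \<Rightarrow> ('a set \<times> 'm) \<Rightarrow> ('a set \<times> 'm)" where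
  "omega_min Mmin X Y pi p =
     (case p of (Z, f) \<Rightarrow> (pi ` Z, Mmin Z (pi ` Z) (restrict pi Z) f))"

text \<open>An instance: a set V of elements, the type D v of each element, and the set C
of constraints; (v, w, pi) in C means (v, w) in E_pi with pi : D v -> D w.\<close>

definition lc_instance ::
  "'v set \<Rightarrow> ('v \<Rightarrow> 'a set) \<Rightarrow> ('v \<times> 'v \<times> ('a \<Rightarrow> 'a)) set \<Rightarrow> bool" where
  "lc_instance V D C \<longleftrightarrow> finite V \<and> (\<forall>v\<in>V. finite (D v)) \<and>
     (\<forall>(v, w, pi)\<in>C. v \<in> V \<and> w \<in> V \<and> pi \<in> D v \<rightarrow>\<^sub>E D w)"

definition lc_hom ::
  "'v set \<Rightarrow> ('v \<Rightarrow> 'a set) \<Rightarrow> ('v \<times> 'v \<times> ('a \<Rightarrow> 'a)) set \<Rightarrow>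
   ('a set \<Rightarrow> 'm set) \<Rightarrow> ('a set \<Rightarrow> 'a set \<Rightarrow> ('a \<Rightarrow> 'a) \<Rightarrow> 'm \<Rightarrow> 'm) \<Rightarrow>
   ('v \<Rightarrow> 'm) \<Rightarrow> bool" where
  "lc_hom V D C Mel Mmin h \<longleftrightarrow>
     (\<forall>v\<in>V. h v \<in> Mel (D v)) \<and>
     (\<forall>(v, w, pi)\<in>C. Mmin (D v) (D w) pi (h v) = h w)"

definition lc_hom_exists ::
  "'v set \<Rightarrow> ('v \<Rightarrow> 'a set) \<Rightarrow> ('v \<times> 'v \<times> ('a \<Rightarrow> 'a)) set \<Rightarrow>
   ('a set \<Rightarrow> 'm set) \<Rightarrow> ('a set \<Rightarrow> 'a set \<Rightarrow> ('a \<Rightarrow> 'a) \<Rightarrow> 'm \<Rightarrow> 'm) \<Rightarrow> bool" where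
  "lc_hom_exists V D C Mel Mmin \<longleftrightarrow> (\<exists>h. lc_hom V D C Mel Mmin h)"

definition arc_step ::
  "('v \<times> 'v \<times> ('a \<Rightarrow> 'a)) set \<Rightarrow> ('v \<Rightarrow> 'a set) \<Rightarrow> ('v \<Rightarrow> 'a set)" where
  "arc_step C F = (\<lambda>v. F v
      \<inter> {x. \<forall>(u, w, pi)\<in>C. u = v \<longrightarrow> pi x \<in> F w}
      \<inter> {y. \<forall>(u, w, pi)\<in>C. w = v \<longrightarrow> y \<in> pi ` F u})"

text \<open>The final family: iterate from F = D until nothing changes; since the
sequence is decreasing and eventually constant, its result is the intersection.\<close>

definition arc_dom ::
  "('v \<Rightarrow> 'a set) \<Rightarrow> ('v \<times> 'v \<times> ('a \<Rightarrow> 'a)) set \<Rightarrow> ('v \<Rightarrow> 'a set)" where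
  "arc_dom D C = (\<lambda>v. \<Inter>n. ((arc_step C ^^ n) D) v)"

definition arc_cons ::
  "('v \<Rightarrow> 'a set) \<Rightarrow> ('v \<times> 'v \<times> ('a \<Rightarrow> 'a)) set \<Rightarrow> ('v \<times> 'v \<times> ('a \<Rightarrow> 'a)) set" where
  "arc_cons D C = (\<lambda>(v, w, pi). (v, w, restrict pi (arc_dom D C v))) ` C"

end

theory Submission
  imports Defs
begin

lemma dec_stab:
  fixes A :: "nat \<Rightarrow> 'a set"
  assumes dec: "\<And>n. A (Suc n) \<subseteq> A n" and fin: "finite (A 0)"
  shows "\<exists>N. \<forall>n\<ge>N. A n = A N"
proof -
  have anti: "m \<le> n \<Longrightarrow> A n \<subseteq> A m" for m n
    by (induction n rule: dec_induct) (use dec in auto)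
  have finA: "finite (A n)" for n using anti[of 0 n] fin finite_subset by blast
  obtain N where N: "\<forall>k. card (A N) \<le> card (A k)"
    using ex_has_least_nat[of "\<lambda>_. True" 0 "\<lambda>k. card (A k)"] by blast
  have "\<forall>n\<ge>N. A n = A N"
  proof (intro allI impI)
    fix n assume "N \<le> n"
    then have "A n \<subseteq> A N" by (rule anti)
    moreover have "card (A N) \<le> card (A n)" using N by blast
    moreover have "card (A n) \<le> card (A N)" using \<open>A n \<subseteq> A N\<close> finA by (rule card_mono[rotated])
    ultimately show "A n = A N" using card_subset_eq[OF finA[of N]] by (simp add: le_antisym)
  qed
  then show ?thesis by blast
qed

lemma S_Suc: "(arc_step C ^^ Suc n) D = arc_step C ((arc_step C ^^ n) D)"
  by simp

lemma S_Suc_mem: "x \<in> (arc_step C ^^ Suc n) D v \<longleftrightarrow> x \<in> (arc_step C ^^ n) D v \<and>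
   (\<forall>(u, w, pi)\<in>C. u = v \<longrightarrow> pi x \<in> (arc_step C ^^ n) D w) \<and>
   (\<forall>(u, w, pi)\<in>C. w = v \<longrightarrow> x \<in> pi ` (arc_step C ^^ n) D u)"
  unfolding S_Suc arc_step_def[of C "(arc_step C ^^ n) D"] by simp

lemma S_dec: "(arc_step C ^^ Suc n) D v \<subseteq> (arc_step C ^^ n) D v"
  by (auto simp add: arc_step_def)

lemma S_anti: "m \<le> n \<Longrightarrow> (arc_step C ^^ n) D v \<subseteq> (arc_step C ^^ m) D v"
proof (induction n rule: dec_induct)
  case base then show ?case by simp
next
  case (step n) show ?case by (rule order_trans[OF S_dec step.IH])
qed

lemma arc_dom_sub: "arc_dom D C v \<subseteq> (arc_step C ^^ n) D v"
  unfolding arc_dom_def by blast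

lemma arc_dom_D: "arc_dom D C v \<subseteq> D v"
  using arc_dom_sub[of D C v 0] by simp

lemma arc_fix:
  assumes inst: "lc_instance V D C" and c: "(u, w, pi) \<in> C"
  shows "pi ` arc_dom D C u = arc_dom D C w"
proof (rule equalityI)
  let ?S = "\<lambda>n. (arc_step C ^^ n) D"
  show "pi ` arc_dom D C u \<subseteq> arc_dom D C w"
  proof
    fix y assume "y \<in> pi ` arc_dom D C u"
    then obtain x where x: "x \<in> arc_dom D C u" "y = pi x" by blast
    have "y \<in> ?S n w" for n
    proof -
      have "x \<in> ?S (Suc n) u" using x arc_dom_sub[of D C u "Suc n"] by blast
      then show ?thesis using c x(2) unfolding S_Suc arc_step_def by fastforce
    qed
    then show "y \<in> arc_dom D C w" unfolding arc_dom_def by blast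
  qed
  show "arc_dom D C w \<subseteq> pi ` arc_dom D C u"
  proof
    fix y assume y: "y \<in> arc_dom D C w"
    have "u \<in> V" using inst c unfolding lc_instance_def by blast
    then have "finite (D u)" using inst unfolding lc_instance_def by blast
    then obtain N where N: "\<forall>n\<ge>N. ?S n u = ?S N u"
    proof -
      have "finite (?S 0 u)" using \<open>finite (D u)\<close> by simp
      from dec_stab[of "\<lambda>n. ?S n u", OF S_dec this] show ?thesis using that by blast
    qed
    have eq: "arc_dom D C u = ?S N u"
    proof (rule equalityI)
      show "arc_dom D C u \<subseteq> ?S N u" by (rule arc_dom_sub)
      show "?S N u \<subseteq> arc_dom D C u"
      proof
        fix x assume xN: "x \<in> ?S N u"
        have "x \<in> ?S n u" for n
        proof (cases "n \<le> N")
          case True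
          have "?S N u \<subseteq> ?S n u"
            using True by (rule S_anti)
          then show ?thesis using xN by blast
        next
          case False
          then have "N \<le> n" by simp
          then have "?S n u = ?S N u" using N by blast
          then show ?thesis using xN by simp
        qed
        then show "x \<in> arc_dom D C u" unfolding arc_dom_def by blast
      qed
    qed
    have "y \<in> ?S (Suc N) w" using y arc_dom_sub[of D C w "Suc N"] by blast
    then have "y \<in> pi ` ?S N u" using c unfolding S_Suc arc_step_def by fastforce
    then show "y \<in> pi ` arc_dom D C u" using eq by simp
  qed
qed

lemma minion_mem:
  assumes M: "is_minion Mel Mmin" and "finite X" "finite Y" "pi \<in> X \<rightarrow>\<^sub>E Y" "f \<in> Mel X"
  shows "Mmin X Y pi f \<in> Mel Y"
proof -
  have "\<forall>X Y pi f. finite X \<and> finite Y \<and> pi \<in> X \<rightarrow>\<^sub>E Y \<and> f \<in> Mel X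
        \<longrightarrow> Mmin X Y pi f \<in> Mel Y"
    using M unfolding is_minion_def by (elim conjE)
  then show ?thesis using assms(2-5) by simp
qed

lemma minion_comp:
  assumes M: "is_minion Mel Mmin" and "finite X" "finite Y" "finite Z"
    "sigma \<in> X \<rightarrow>\<^sub>E Y" "pi \<in> Y \<rightarrow>\<^sub>E Z" "f \<in> Mel X"
  shows "Mmin Y Z pi (Mmin X Y sigma f) = Mmin X Z (compose X pi sigma) f"
proof -
  have "\<forall>X Y Z sigma pi f. finite X \<and> finite Y \<and> finite Z \<and>
        sigma \<in> X \<rightarrow>\<^sub>E Y \<and> pi \<in> Y \<rightarrow>\<^sub>E Z \<and> f \<in> Mel X
        \<longrightarrow> Mmin Y Z pi (Mmin X Y sigma f) = Mmin X Z (compose X pi sigma) f"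
    using M unfolding is_minion_def by (elim conjE)
  then show ?thesis using assms(2-7) by simp
qed

theorem mainTheorem14:
  fixes V :: "'v set" and D :: "'v \<Rightarrow> 'a set"
    and C :: "('v \<times> 'v \<times> ('a \<Rightarrow> 'a)) set"
    and Mel :: "'a set \<Rightarrow> 'm set"
    and Mmin :: "'a set \<Rightarrow> 'a set \<Rightarrow> ('a \<Rightarrow> 'a) \<Rightarrow> 'm \<Rightarrow> 'm"
  assumes "lc_instance V D C"
    and "is_minion Mel Mmin"
  shows "lc_hom_exists V (arc_dom D C) (arc_cons D C) Mel Mmin
     \<longleftrightarrow> lc_hom_exists V D C (omega_el Mel) (omega_min Mmin)"
proof
  let ?F = "arc_dom D C"
  assume "lc_hom_exists V ?F (arc_cons D C) Mel Mmin"
  then obtain h where h: "lc_hom V ?F (arc_cons D C) Mel Mmin h"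
    unfolding lc_hom_exists_def by blast
  have "lc_hom V D C (omega_el Mel) (omega_min Mmin) (\<lambda>v. (?F v, h v))"
    unfolding lc_hom_def
  proof (intro conjI ballI)
    fix v assume "v \<in> V"
    then have "h v \<in> Mel (?F v)" using h unfolding lc_hom_def by blast
    then show "(?F v, h v) \<in> omega_el Mel (D v)"
      by (simp add: omega_el_def arc_dom_D)
  next
    fix c assume c: "c \<in> C"
    obtain v w pi where cc: "c = (v, w, pi)" by (cases c) auto
    have "(v, w, restrict pi (?F v)) \<in> arc_cons D C"
      using c unfolding arc_cons_def by (intro image_eqI[where x="(v, w, pi)"]) (auto simp: cc)
    then have "case (v, w, restrict pi (?F v)) of (v, w, pi) \<Rightarrow> Mmin (?F v) (?F w) pi (h v) = h w"
      by (rule bspec[OF conjunct2[OF h[unfolded lc_hom_def]]])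
    then have "Mmin (?F v) (?F w) (restrict pi (?F v)) (h v) = h w" by simp
    moreover have "pi ` ?F v = ?F w" using arc_fix[OF assms(1)] c unfolding cc .
    ultimately show "case c of (v, w, pi) \<Rightarrow>
          omega_min Mmin (D v) (D w) pi (?F v, h v) = (?F w, h w)"
      unfolding cc omega_min_def by simp
  qed
  then show "lc_hom_exists V D C (omega_el Mel) (omega_min Mmin)"
    unfolding lc_hom_exists_def by blast
next
  let ?F = "arc_dom D C"
  let ?S = "\<lambda>n. (arc_step C ^^ n) D"
  assume "lc_hom_exists V D C (omega_el Mel) (omega_min Mmin)"
  then obtain g where g: "lc_hom V D C (omega_el Mel) (omega_min Mmin) g"
    unfolding lc_hom_exists_def by blast
  define Y where "Y v = fst (g v)" for v
  define f where "f v = snd (g v)" for v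
  have Yg: "Y v \<subseteq> D v \<and> f v \<in> Mel (Y v)" if v: "v \<in> V" for v
  proof -
    have "g v \<in> omega_el Mel (D v)" using g v unfolding lc_hom_def by blast
    then show ?thesis unfolding Y_def f_def omega_el_def by (cases "g v") simp
  qed
  have Cg: "\<And>v w pi. (v, w, pi) \<in> C \<Longrightarrow> pi ` Y v = Y w \<and>
       Mmin (Y v) (pi ` Y v) (restrict pi (Y v)) (f v) = f w"
  proof -
    fix v w pi assume c: "(v, w, pi) \<in> C"
    then have "case (v, w, pi) of (v, w, pi) \<Rightarrow> omega_min Mmin (D v) (D w) pi (g v) = g w"
      by (rule bspec[OF conjunct2[OF g[unfolded lc_hom_def]]])
    then have "omega_min Mmin (D v) (D w) pi (g v) = g w" by simp
    then have "g w = (pi ` Y v, Mmin (Y v) (pi ` Y v) (restrict pi (Y v)) (f v))"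
      unfolding Y_def f_def omega_min_def by (cases "g v") simp
    then show "pi ` Y v = Y w \<and> Mmin (Y v) (pi ` Y v) (restrict pi (Y v)) (f v) = f w"
      unfolding Y_def f_def by simp
  qed
  have CV: "v \<in> V \<and> w \<in> V \<and> pi \<in> D v \<rightarrow>\<^sub>E D w" if "(v, w, pi) \<in> C" for v w pi
  proof -
    have "\<forall>(v, w, pi)\<in>C. v \<in> V \<and> w \<in> V \<and> pi \<in> D v \<rightarrow>\<^sub>E D w"
      using assms(1) unfolding lc_instance_def by (rule conjunct2[OF conjunct2])
    then show ?thesis using that by fastforce
  qed
  have finD: "\<And>v. v \<in> V \<Longrightarrow> finite (D v)" using assms(1) unfolding lc_instance_def by blast
  have YS: "\<forall>v\<in>V. Y v \<subseteq> ?S n v" for n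
  proof (induction n)
    case 0 then show ?case using Yg by simp
  next
    case (Suc n)
    show ?case
    proof (intro ballI subsetI)
      fix v x assume v: "v \<in> V" and x: "x \<in> Y v"
      have a: "x \<in> ?S n v" using Suc.IH v x by blast
      have b: "pi x \<in> ?S n w" if "(v, w, pi) \<in> C" for w pi
      proof -
        have "pi x \<in> Y w" using conjunct1[OF Cg[OF that]] x by blast
        moreover have "w \<in> V" using CV[OF that] by simp
        ultimately show ?thesis using Suc.IH by blast
      qed
      have c: "x \<in> pi ` ?S n u" if "(u, v, pi) \<in> C" for u pi
      proof -
        have "x \<in> pi ` Y u" using conjunct1[OF Cg[OF that]] x by simp
        moreover have "u \<in> V" using CV[OF that] by simp
        then have "Y u \<subseteq> ?S n u" using Suc.IH by blast
        ultimately show ?thesis by blast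
      qed
      show "x \<in> ?S (Suc n) v"
        unfolding S_Suc_mem using a b c by blast
    qed
  qed
  have YF: "Y v \<subseteq> ?F v" if "v \<in> V" for v
    unfolding arc_dom_def using YS that by (intro subsetI INT_I) blast
  have finF: "finite (?F v)" if "v \<in> V" for v
    using finD[OF that] arc_dom_D by (rule finite_subset[rotated])
  have finY: "finite (Y v)" if "v \<in> V" for v
    using finF[OF that] YF[OF that] by (rule finite_subset[rotated])
  note M = assms(2)
  define h where "h v = Mmin (Y v) (?F v) (restrict id (Y v)) (f v)" for v
  have "lc_hom V ?F (arc_cons D C) Mel Mmin h"
    unfolding lc_hom_def
  proof (intro conjI ballI)
    fix v assume v: "v \<in> V"
    have "restrict id (Y v) \<in> Y v \<rightarrow>\<^sub>E ?F v" using YF[OF v] by auto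
    then show "h v \<in> Mel (?F v)" unfolding h_def
      using minion_mem[OF M finY[OF v] finF[OF v]] Yg[OF v] by blast
  next
    fix c assume "c \<in> arc_cons D C"
    then obtain v w pi where c: "(v, w, pi) \<in> C"
      and cc: "c = (v, w, restrict pi (?F v))" unfolding arc_cons_def by auto
    have v: "v \<in> V" and w: "w \<in> V" and pi: "pi \<in> D v \<rightarrow>\<^sub>E D w" using CV[OF c] by auto
    have fix1: "pi ` ?F v = ?F w" by (rule arc_fix[OF assms(1) c])
    have Yw: "Y w = pi ` Y v" and fw: "f w = Mmin (Y v) (pi ` Y v) (restrict pi (Y v)) (f v)"
      using Cg[OF c] by auto
    have i1: "restrict id (Y v) \<in> Y v \<rightarrow>\<^sub>E ?F v" using YF[OF v] by auto
    have r1: "restrict pi (?F v) \<in> ?F v \<rightarrow>\<^sub>E ?F w" using fix1 by auto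
    have r2: "restrict pi (Y v) \<in> Y v \<rightarrow>\<^sub>E Y w" using Yw by auto
    have i2: "restrict id (Y w) \<in> Y w \<rightarrow>\<^sub>E ?F w" using YF[OF w] by auto
    have "Mmin (?F v) (?F w) (restrict pi (?F v)) (h v)
        = Mmin (Y v) (?F w) (compose (Y v) (restrict pi (?F v)) (restrict id (Y v))) (f v)"
      unfolding h_def using minion_comp[OF M finY[OF v] finF[OF v] finF[OF w] i1 r1] Yg[OF v] by blast
    also have "compose (Y v) (restrict pi (?F v)) (restrict id (Y v)) = restrict pi (Y v)"
      using YF[OF v] by (intro ext) (auto simp: compose_def)
    also have "restrict pi (Y v) = compose (Y v) (restrict id (Y w)) (restrict pi (Y v))"
      using Yw by (intro ext) (auto simp: compose_def)
    also have "Mmin (Y v) (?F w) \<dots> (f v) = Mmin (Y w) (?F w) (restrict id (Y w)) (f w)"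
      unfolding fw Yw[symmetric]
      using minion_comp[OF M finY[OF v] finY[OF w] finF[OF w] r2 i2] Yg[OF v] by simp
    finally have "Mmin (?F v) (?F w) (restrict pi (?F v)) (h v) = h w"
      by (simp only: h_def)
    then show "case c of (v, w, pi) \<Rightarrow> Mmin (?F v) (?F w) pi (h v) = h w"
      unfolding cc prod.case .
  qed
  then show "lc_hom_exists V ?F (arc_cons D C) Mel Mmin"
    unfolding lc_hom_exists_def by blast
qed

end
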